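(* Let $N\ge 1$ and let $\mathcal{M}_N$ be the set of real symmetric $2N\times 2N$ matrices $\mathbf{V}$ with $\mathbf{V}+\tfrac{i}{2}\mathbf{\Omega}>0$. For $\mathbf{V}\in\mathcal{M}_N$ and real symmetric $2N\times 2N$ matrices $\mathbf{A},\mathbf{B}$ define $$G_{\mathbf{V}}(\mathbf{A},\mathbf{B})=\int_{-1}^{1}d\lambda\;\mathrm{Tr}\Big[\mathbf{B}\,\big(2\mathbf{V}+i\lambda\mathbf{\Omega}\big)^{-1}\mathbf{A}\,\big(2\mathbf{V}+i\lambda\mathbf{\Omega}\big)^{-1}\Big].$$ Then for every real symplectic $2N\times 2N$ matrix $\mathbf{S}$ (i.e. $\mathbf{S}\mathbf{\Omega}\mathbf{S}^T=\mathbf{\Omega}$), every $\mathbf{V}\in\mathcal{M}_N$ and all real symmetric $\mathbf{A},\mathbf{B}$, $$G_{\mathbf{S}\mathbf{V}\mathbf{S}^T}\big(\mathbf{S}\mathbf{A}\mathbf{S}^T,\mathbf{S}\mathbf{B}\mathbf{S}^T\big)=G_{\mathbf{V}}(\mathbf{A},\mathbf{B}).$$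
   Context: $\mathbf{\Omega}$ is the $2N\times 2N$ symplectic form $\mathbf{\Omega}=\begin{pmatrix}0&\mathbb{I}_N\\-\mathbb{I}_N&0\end{pmatrix}$. The set $\mathcal{M}_N$ parametrizes (via covariance matrices) the faithful, zero-displacement $N$-mode bosonic Gaussian states, and is an open subset of the space of real symmetric $2N\times 2N$ matrices, whose tangent space at each point is identified with the real symmetric $2N\times2N$ matrices. $G_{\mathbf{V}}$ is the Kubo-Mori-Bogoliubov (KMB) metric on this manifold (the negative Hessian of the quantum relative entropy between Gaussian states, written in covariance-matrix coordinates). *)

theory Defs
  imports "HOL-Analysis.Analysis"
begin

text \<open>Modes are indexed by a finite type 'n (so N = CARD('n) \<ge> 1); the 2N phase-space
  coordinates are indexed by 'n + 'n, the first copy (Inl) being the x-block and the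
  second copy (Inr) the p-block.\<close>

type_synonym ('n) rmat = "real ^ ('n + 'n) ^ ('n + 'n)"
type_synonym ('n) cmat = "complex ^ ('n + 'n) ^ ('n + 'n)"

definition symplectic_form :: "('n::finite) rmat" ("\<Omega>") where
  "symplectic_form = (\<chi> a b. (case (a, b) of
      (Inl i, Inr j) \<Rightarrow> (if i = j then 1 else 0)
    | (Inr i, Inl j) \<Rightarrow> (if i = j then -1 else 0)
    | _ \<Rightarrow> 0))"

definition cplx :: "('n::finite) rmat \<Rightarrow> 'n cmat" where
  "cplx A = (\<chi> a b. complex_of_real (A $ a $ b))"

definition real_symmetric :: "('n::finite) rmat \<Rightarrow> bool" where
  "real_symmetric A \<longleftrightarrow> transpose A = A"

definition hermitian :: "('n::finite) cmat \<Rightarrow> bool" where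
  "hermitian M \<longleftrightarrow> (\<forall>a b. M $ b $ a = cnj (M $ a $ b))"

definition pos_def_cmat :: "('n::finite) cmat \<Rightarrow> bool" where
  "pos_def_cmat M \<longleftrightarrow> hermitian M \<and>
     (\<forall>x :: complex ^ ('n + 'n). x \<noteq> 0 \<longrightarrow>
        0 < Re (\<Sum>a\<in>UNIV. \<Sum>b\<in>UNIV. cnj (x $ a) * M $ a $ b * x $ b))"

definition cov_matrices :: "('n::finite) rmat set" where
  "cov_matrices = {V. real_symmetric V \<and>
       pos_def_cmat (\<chi> a b. complex_of_real (V $ a $ b) + (\<i> / 2) * complex_of_real (\<Omega> $ a $ b))}"

definition symplectic :: "('n::finite) rmat \<Rightarrow> bool" where
  "symplectic S \<longleftrightarrow> S ** \<Omega> ** transpose S = \<Omega>"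

definition KMB_metric :: "('n::finite) rmat \<Rightarrow> 'n rmat \<Rightarrow> 'n rmat \<Rightarrow> complex" where
  "KMB_metric V A B = integral {-1..1} (\<lambda>t::real.
      let R = matrix_inv (\<chi> a b. 2 * complex_of_real (V $ a $ b)
                         + \<i> * complex_of_real t * complex_of_real (\<Omega> $ a $ b))
      in trace (cplx B ** R ** cplx A ** R))"

end

theory Submission imports Defs begin

lemma sum_UNIV_Plus: "sum (f :: ('a::finite + 'b::finite) \<Rightarrow> 'c::comm_monoid_add) UNIV = (\<Sum>i\<in>UNIV. f (Inl i)) + (\<Sum>j\<in>UNIV. f (Inr j))"
  using sum.Plus[of "UNIV::'a set" "UNIV::'b set" f] by (simp add: o_def)

lemma Omega_orth: "(\<Omega>::('n::finite) rmat) ** transpose \<Omega> = mat 1"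
  unfolding vec_eq_iff
proof (intro allI)
  fix a b :: "'n + 'n"
  show "((\<Omega>::'n rmat) ** transpose \<Omega>) $ a $ b = mat 1 $ a $ b"
    by (cases a; cases b)
       (simp_all add: matrix_matrix_mult_def transpose_def symplectic_form_def mat_def sum_UNIV_Plus if_distrib if_distribR cong: if_cong)
qed

lemma cplx_mult: "cplx (A ** B) = cplx A ** cplx B"
  by (simp add: cplx_def matrix_matrix_mult_def vec_eq_iff)

lemma cplx_transpose: "cplx (transpose A) = transpose (cplx A)"
  by (simp add: cplx_def transpose_def vec_eq_iff)

lemma cplx_one: "cplx (mat 1) = mat 1"
  by (simp add: cplx_def mat_def vec_eq_iff)

lemma matrix_inv_eq:
  fixes A B :: "'a::field^'n^'n"
  assumes "A ** B = mat 1"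
  shows "matrix_inv A = B"
proof -
  have "B ** A = mat 1" using assms matrix_left_right_inverse by blast
  then have "\<exists>A'. A ** A' = mat 1 \<and> A' ** A = mat 1" using assms by blast
  then have h: "A ** matrix_inv A = mat 1 \<and> matrix_inv A ** A = mat 1"
    unfolding matrix_inv_def by (rule someI_ex)
  have "matrix_inv A = matrix_inv A ** (A ** B)" using assms by simp
  also have "\<dots> = B" using h by (simp add: matrix_mul_assoc)
  finally show ?thesis .
qed

definition scl :: "'a::semiring_1 \<Rightarrow> 'a^'n^'m \<Rightarrow> 'a^'n^'m" where
  "scl c A = (\<chi> a b. c * A $ a $ b)"

lemma scl_left: "(X::'a::comm_semiring_1^'n^'m) ** scl c A = scl c (X ** A)"
  by (simp add: scl_def matrix_matrix_mult_def vec_eq_iff sum_distrib_left mult_ac)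

lemma scl_right: "scl c (A::'a::comm_semiring_1^'n^'m) ** X = scl c (A ** X)"
  by (simp add: scl_def matrix_matrix_mult_def vec_eq_iff sum_distrib_left mult_ac)

lemma matrix_add_rdistrib: "((B + C) ** (A::'a::semiring_1^'n^'m)) = (B ** A) + (C ** A)"
  by (vector matrix_matrix_mult_def sum.distrib[symmetric] field_simps)

lemma symplectic_inv:
  assumes "symplectic (S::('n::finite) rmat)"
  shows "S ** (\<Omega> ** transpose S ** transpose \<Omega>) = mat 1"
proof -
  have "S ** (\<Omega> ** transpose S ** transpose \<Omega>) = (S ** \<Omega> ** transpose S) ** transpose \<Omega>"
    by (simp add: matrix_mul_assoc)
  also have "\<dots> = mat 1" using assms Omega_orth unfolding symplectic_def by simp
  finally show ?thesis .
qed

lemma term1: "Re (cnj a * (complex_of_real v + \<i> / 2 * complex_of_real w) * b)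
   = Re (cnj a * complex_of_real v * b) + Re (cnj a * (\<i> * complex_of_real w) * b) / 2"
  by (simp add: algebra_simps)

lemma term2: "Re (cnj (cnj a) * complex_of_real v * cnj b) = Re (cnj a * complex_of_real v * b)"
  by (simp add: algebra_simps)

lemma term3: "Re (cnj (cnj a) * (\<i> * complex_of_real v) * cnj b) = - Re (cnj a * (\<i> * complex_of_real v) * b)"
  by (simp add: algebra_simps)

lemma term4: "Re (cnj a * (2 * complex_of_real v + \<i> * complex_of_real t * complex_of_real w) * b)
   = 2 * Re (cnj a * complex_of_real v * b) + t * Re (cnj a * (\<i> * complex_of_real w) * b)"
  by (simp add: algebra_simps)

lemma Mt_ker:
  fixes V :: "('n::finite) rmat" and x :: "complex ^ ('n + 'n)"
  assumes V: "V \<in> cov_matrices" and t: "-1 \<le> t" "t \<le> 1"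
    and Mx: "(\<chi> a b. 2 * complex_of_real (V $ a $ b)
                         + \<i> * complex_of_real t * complex_of_real (\<Omega> $ a $ b)) *v x = 0"
  shows "x = 0"
proof (rule ccontr)
  assume x0: "x \<noteq> 0"
  define P where "P y = (\<Sum>a\<in>UNIV. \<Sum>b\<in>UNIV. Re (cnj (y$a) * complex_of_real (V$a$b) * y$b))" for y :: "complex ^ ('n + 'n)"
  define Q where "Q y = (\<Sum>a\<in>UNIV. \<Sum>b\<in>UNIV. Re (cnj (y$a) * (\<i> * complex_of_real ((\<Omega>::'n rmat)$a$b)) * y$b))" for y :: "complex ^ ('n + 'n)"
  have pos: "0 < P y + Q y / 2" if "y \<noteq> 0" for y
  proof -
    have "0 < Re (\<Sum>a\<in>UNIV. \<Sum>b\<in>UNIV. cnj (y $ a) * (\<chi> a b. complex_of_real (V $ a $ b) + (\<i> / 2) * complex_of_real ((\<Omega>::'n rmat) $ a $ b)) $ a $ b * y $ b)"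
      using V that unfolding cov_matrices_def pos_def_cmat_def by blast
    also have "\<dots> = P y + Q y / 2"
      by (simp only: P_def Q_def vec_lambda_beta Re_sum term1 sum.distrib sum_divide_distrib)
    finally show ?thesis .
  qed
  define xc where "xc = (\<chi> a. cnj (x $ a))"
  have xc0: "xc \<noteq> 0" using x0 unfolding xc_def by (metis (no_types, lifting) complex_cnj_zero_iff vec_eq_iff vec_lambda_beta zero_index)
  have "P xc = P x" unfolding P_def xc_def by (simp only: vec_lambda_beta term2)
  moreover have "Q xc = - Q x" unfolding Q_def xc_def by (simp only: vec_lambda_beta term3 sum_negf)
  ultimately have a: "0 < P x + Q x / 2" and b: "0 < P x - Q x / 2"
    using pos[OF x0] pos[OF xc0] by auto
  have key: "0 < 2 * P x + t * Q x"
  proof -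
    have eq: "2 * P x + t * Q x = (1 + t) * (P x + Q x / 2) + (1 - t) * (P x - Q x / 2)"
      by (simp add: field_simps)
    show ?thesis
    proof (cases "t \<ge> 0")
      case True
      then have "0 < (1 + t) * (P x + Q x / 2)" using a by simp
      moreover have "0 \<le> (1 - t) * (P x - Q x / 2)" using b t by simp
      ultimately show ?thesis using eq by linarith
    next
      case False
      then have "0 \<le> (1 + t) * (P x + Q x / 2)" using a t by simp
      moreover have "0 < (1 - t) * (P x - Q x / 2)" using b False by simp
      ultimately show ?thesis using eq by linarith
    qed
  qed
  have "(\<Sum>a\<in>UNIV. \<Sum>b\<in>UNIV. cnj (x $ a) * (2 * complex_of_real (V $ a $ b)
                         + \<i> * complex_of_real t * complex_of_real ((\<Omega>::'n rmat) $ a $ b)) * x $ b)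
        = (\<Sum>a\<in>UNIV. cnj (x $ a) * (((\<chi> a b. 2 * complex_of_real (V $ a $ b)
                         + \<i> * complex_of_real t * complex_of_real ((\<Omega>::'n rmat) $ a $ b)) *v x) $ a))"
    by (simp add: matrix_vector_mult_def sum_distrib_left mult.assoc)
  also have "\<dots> = 0" using Mx by simp
  finally have "Re (\<Sum>a\<in>UNIV. \<Sum>b\<in>UNIV. cnj (x $ a) * (2 * complex_of_real (V $ a $ b)
                         + \<i> * complex_of_real t * complex_of_real ((\<Omega>::'n rmat) $ a $ b)) * x $ b) = 0" by simp
  moreover have "Re (\<Sum>a\<in>UNIV. \<Sum>b\<in>UNIV. cnj (x $ a) * (2 * complex_of_real (V $ a $ b)
                         + \<i> * complex_of_real t * complex_of_real ((\<Omega>::'n rmat) $ a $ b)) * x $ b) = 2 * P x + t * Q x"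
    by (simp only: P_def Q_def Re_sum term4 sum.distrib sum_distrib_left)
  ultimately show False using key by simp
qed

lemma cancel_lr: "A ** B = mat 1 \<Longrightarrow> X ** A ** B = (X::'a::semiring_1^'n^'n)"
  by (metis matrix_mul_assoc matrix_mul_rid)

theorem theorem1:
  fixes S V A B :: "('n::finite) rmat"
  assumes "symplectic S"
    and "V \<in> cov_matrices"
    and "real_symmetric A"
    and "real_symmetric B"
  shows "KMB_metric (S ** V ** transpose S) (S ** A ** transpose S) (S ** B ** transpose S)
           = KMB_metric V A B"
proof -
  define Si where "Si = \<Omega> ** transpose S ** transpose \<Omega>"
  have SSi: "S ** Si = mat 1" using symplectic_inv[OF assms(1)] unfolding Si_def .
  define T where "T = cplx S"
  define Ti where "Ti = cplx Si"
  have TTi: "T ** Ti = mat 1" unfolding T_def Ti_def by (simp add: cplx_mult[symmetric] SSi cplx_one)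
  have TiT: "Ti ** T = mat 1" using TTi matrix_left_right_inverse by blast
  have TtTit: "transpose T ** transpose Ti = mat 1"
    by (metis TiT matrix_transpose_mul transpose_mat)
  have SO: "S ** \<Omega> ** transpose S = \<Omega>" using assms(1) unfolding symplectic_def .
  show ?thesis unfolding KMB_metric_def Let_def
  proof (rule integral_cong)
    fix t :: real assume t: "t \<in> {-1..1}"
    define M where "M = (\<chi> a b. 2 * complex_of_real (V $ a $ b)
                         + \<i> * complex_of_real t * complex_of_real ((\<Omega>::'n rmat) $ a $ b))"
    define M' where "M' = (\<chi> a b. 2 * complex_of_real ((S ** V ** transpose S) $ a $ b)
                         + \<i> * complex_of_real t * complex_of_real ((\<Omega>::'n rmat) $ a $ b))"
    have M1: "M = scl 2 (cplx V) + scl (\<i> * complex_of_real t) (cplx \<Omega>)"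
      by (simp add: M_def vec_eq_iff scl_def cplx_def)
    have M2: "M' = scl 2 (cplx (S ** V ** transpose S)) + scl (\<i> * complex_of_real t) (cplx \<Omega>)"
      by (simp add: M'_def vec_eq_iff scl_def cplx_def)
    have M'eq: "M' = T ** M ** transpose T"
    proof -
      have e1: "T ** cplx V ** transpose T = cplx (S ** V ** transpose S)"
        by (simp only: T_def cplx_mult cplx_transpose)
      have e2: "T ** cplx \<Omega> ** transpose T = cplx \<Omega>"
        by (simp only: T_def cplx_mult[symmetric] cplx_transpose[symmetric] SO)
      show ?thesis unfolding M1 M2 matrix_add_ldistrib matrix_add_rdistrib scl_left scl_right
        by (simp only: e1 e2)
    qed
    have "\<exists>B. B ** M = mat 1"
    proof (unfold matrix_left_invertible_ker, intro allI impI)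
      fix x assume "M *v x = 0"
      have tb: "-1 \<le> t" "t \<le> 1" using t by auto
      show "x = 0" using \<open>M *v x = 0\<close> unfolding M_def by (rule Mt_ker[OF assms(2) tb])
    qed
    then obtain R0 where "R0 ** M = mat 1" by blast
    then have MR0: "M ** R0 = mat 1" using matrix_left_right_inverse by blast
    define R where "R = matrix_inv M"
    have RR0: "R = R0" unfolding R_def using matrix_inv_eq[OF MR0] .
    have MR: "M ** R = mat 1" using MR0 RR0 by simp
    have "M' ** (transpose Ti ** R ** Ti) = T ** M ** transpose T ** transpose Ti ** R ** Ti"
      unfolding M'eq by (simp only: matrix_mul_assoc)
    also have "\<dots> = T ** M ** R ** Ti" by (simp only: cancel_lr[OF TtTit])
    also have "\<dots> = mat 1" by (simp only: cancel_lr[OF MR] TTi)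
    finally have invM': "matrix_inv M' = transpose Ti ** R ** Ti" by (rule matrix_inv_eq)
    have "cplx (S ** B ** transpose S) ** matrix_inv M' ** cplx (S ** A ** transpose S) ** matrix_inv M'
        = T ** cplx B ** transpose T ** transpose Ti ** R ** Ti ** T ** cplx A ** transpose T ** transpose Ti ** R ** Ti"
      unfolding invM' by (simp only: T_def cplx_mult cplx_transpose matrix_mul_assoc)
    also have "\<dots> = T ** cplx B ** R ** cplx A ** R ** Ti"
      by (simp only: cancel_lr[OF TtTit] cancel_lr[OF TiT])
    also have "\<dots> = T ** (cplx B ** R ** cplx A ** R ** Ti)"
      by (simp only: matrix_mul_assoc)
    finally have "trace (cplx (S ** B ** transpose S) ** matrix_inv M' ** cplx (S ** A ** transpose S) ** matrix_inv M')
        = trace ((cplx B ** R ** cplx A ** R ** Ti) ** T)"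
      by (metis trace_mul_sym)
    also have "\<dots> = trace (cplx B ** R ** cplx A ** R)"
      by (simp only: cancel_lr[OF TiT])
    finally have fin: "trace (cplx (S ** B ** transpose S) ** matrix_inv M' ** cplx (S ** A ** transpose S) ** matrix_inv M')
        = trace (cplx B ** matrix_inv M ** cplx A ** matrix_inv M)" unfolding R_def .
    show "trace (cplx (S ** B ** transpose S) ** matrix_inv (\<chi> a b. 2 * complex_of_real ((S ** V ** transpose S) $ a $ b)
                         + \<i> * complex_of_real t * complex_of_real ((\<Omega>::'n rmat) $ a $ b)) ** cplx (S ** A ** transpose S) ** matrix_inv (\<chi> a b. 2 * complex_of_real ((S ** V ** transpose S) $ a $ b)
                         + \<i> * complex_of_real t * complex_of_real ((\<Omega>::'n rmat) $ a $ b)))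
        = trace (cplx B ** matrix_inv (\<chi> a b. 2 * complex_of_real (V $ a $ b)
                         + \<i> * complex_of_real t * complex_of_real ((\<Omega>::'n rmat) $ a $ b)) ** cplx A ** matrix_inv (\<chi> a b. 2 * complex_of_real (V $ a $ b)
                         + \<i> * complex_of_real t * complex_of_real ((\<Omega>::'n rmat) $ a $ b)))"
      using fin unfolding M_def M'_def .
  qed
qed

end
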